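(* Let $1<t'<t$ be real, let $X$ be feasible for $Q(t)$ and let $x=\operatorname{diag}(X)$. Set $\alpha=\frac{t'(t'-1)}{t(t-1)}$ and $\beta=\frac{t'(t-t')}{t(t-1)}$. Then $X':=\alpha X+\beta\operatorname{Diag}(x)$ is feasible for $Q(t')$.
   Context: Let $G$ be a simple graph with vertex set $V=\{1,\dots,n\}$, edge set $E$ and adjacency matrix $A$. Let $e$ be the all-ones vector, $\langle M,N\rangle=\operatorname{trace}(M^TN)$, $X\geq 0$ mean entrywise nonnegativity, and $\operatorname{Diag}(x)$ the diagonal matrix with diagonal $x$. For real $t\geq 1$, $Q(t)$ is the semidefinite program $$\min \tfrac12\langle A,X\rangle\ \text{ s.t. } X\succeq 0,\ X\geq 0,\ \operatorname{trace}(X)=t,\ Xe=t\operatorname{diag}(X)$$ over symmetric $n\times n$ matrices $X$; "feasible for $Q(t)$" means satisfying these constraints. *)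

theory Defs
  imports "HOL-Analysis.Analysis"
begin

definition psd :: "real^'n^'n \<Rightarrow> bool" where
  "psd X \<longleftrightarrow> transpose X = X \<and> (\<forall>v. 0 \<le> v \<bullet> (X *v v))"

definition mdiag :: "real^'n^'n \<Rightarrow> real^'n" where
  "mdiag X = (\<chi> i. X $ i $ i)"

definition Diag :: "real^'n \<Rightarrow> real^'n^'n" where
  "Diag x = (\<chi> i j. if i = j then x $ i else 0)"

definition mtrace :: "real^'n^'n \<Rightarrow> real" where
  "mtrace X = (\<Sum>i\<in>UNIV. X $ i $ i)"

definition feasible_Q :: "real \<Rightarrow> real^'n^'n \<Rightarrow> bool" where
  "feasible_Q t X \<longleftrightarrow> transpose X = X \<and> psd X \<and> (\<forall>i j. 0 \<le> X $ i $ j)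
     \<and> mtrace X = t \<and> X *v (\<chi> i. 1) = t *\<^sub>R mdiag X"

end

theory Submission
  imports Defs
begin

lemma mv_comb: "((a::real) *\<^sub>R (X::real^'n^'m) + b *\<^sub>R (Y::real^'n^'m)) *v v = a *\<^sub>R (X *v v) + b *\<^sub>R (Y *v v)"
proof -
  have "(\<Sum>j\<in>UNIV. (a * X $ i $ j + b * Y $ i $ j) * v $ j) =
        a * (\<Sum>j\<in>UNIV. X $ i $ j * v $ j) + b * (\<Sum>j\<in>UNIV. Y $ i $ j * v $ j)" for i
    by (simp add: sum_distrib_left sum.distrib[symmetric] algebra_simps)
  thus ?thesis by (simp add: vec_eq_iff matrix_vector_mult_def)
qed

lemma Diag_mv: "Diag x *v v = (\<chi> i. x $ i * v $ i)"
  by (simp add: vec_eq_iff matrix_vector_mult_def Diag_def if_distrib[of "\<lambda>z. z * _"] cong: if_cong)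

lemma Diag_quad:
  assumes "\<forall>i. 0 \<le> x $ i"
  shows "0 \<le> v \<bullet> (Diag x *v v)"
  unfolding Diag_mv inner_vec_def using assms
  by (auto intro!: sum_nonneg simp: mult.left_commute[of "v $ _"] )

lemma transpose_Diag: "transpose (Diag x) = Diag x"
  by (simp add: vec_eq_iff transpose_def Diag_def)

theorem mainTheorem9:
  fixes X :: "real^'n^'n" and t t' :: real
  assumes "1 < t'" "t' < t" "feasible_Q t X"
  shows "feasible_Q t'
    ((t' * (t' - 1) / (t * (t - 1))) *\<^sub>R X + (t' * (t - t') / (t * (t - 1))) *\<^sub>R Diag (mdiag X))"
proof -
  define a where "a = t' * (t' - 1) / (t * (t - 1))"
  define b where "b = t' * (t - t') / (t * (t - 1))"
  have t1: "t > 1" using assms by linarith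
  have a0: "a \<ge> 0" and b0: "b \<ge> 0" using assms t1 unfolding a_def b_def
    by (auto intro!: divide_nonneg_pos mult_nonneg_nonneg)
  have sym: "transpose X = X" and ps: "\<forall>v. 0 \<le> v \<bullet> (X *v v)" and nn: "\<forall>i j. 0 \<le> X $ i $ j"
    and tr: "mtrace X = t" and row: "X *v (\<chi> i. 1) = t *\<^sub>R mdiag X"
    using assms(3) unfolding feasible_Q_def psd_def by auto
  let ?Y = "a *\<^sub>R X + b *\<^sub>R Diag (mdiag X)"
  have dn: "\<forall>i. 0 \<le> mdiag X $ i" using nn by (simp add: mdiag_def)
  have symY: "transpose ?Y = ?Y"
    using sym by (simp add: transpose_def vec_eq_iff Diag_def)
  have "True" by (simp add: transpose_def vec_eq_iff transpose_Diag[unfolded transpose_def vec_eq_iff]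
        sym[unfolded transpose_def vec_eq_iff])
  have psY: "0 \<le> v \<bullet> (?Y *v v)" for v
  proof -
    have "v \<bullet> (?Y *v v) = a * (v \<bullet> (X *v v)) + b * (v \<bullet> (Diag (mdiag X) *v v))"
      by (simp add: mv_comb inner_add_right)
    thus ?thesis using a0 b0 ps Diag_quad[OF dn, of v] by simp
  qed
  have nnY: "\<forall>i j. 0 \<le> ?Y $ i $ j"
    using a0 b0 nn dn by (simp add: Diag_def)
  have diagY: "mdiag ?Y = (a + b) *\<^sub>R mdiag X"
    by (simp add: mdiag_def Diag_def vec_eq_iff algebra_simps)
  have nz: "t * (t - 1) \<noteq> 0" "t \<noteq> 0" "t - 1 \<noteq> 0" using t1 by auto
  have ab: "a + b = t' / t" unfolding a_def b_def
  proof -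
    have "t' * (t' - 1) / (t * (t - 1)) + t' * (t - t') / (t * (t - 1)) = (t' * (t - 1)) / (t * (t - 1))"
      by (simp add: add_divide_distrib[symmetric] algebra_simps)
    also have "\<dots> = t' / t" using nz by simp
    finally show "t' * (t' - 1) / (t * (t - 1)) + t' * (t - t') / (t * (t - 1)) = t' / t" .
  qed
  have trY: "mtrace ?Y = t'"
  proof -
    have "mtrace ?Y = (a + b) * mtrace X"
      by (simp add: mtrace_def Diag_def mdiag_def sum.distrib sum_distrib_left algebra_simps)
    thus ?thesis using tr ab t1 by simp
  qed
  have rowY: "?Y *v (\<chi> i. 1) = t' *\<^sub>R mdiag ?Y"
  proof -
    have "?Y *v (\<chi> i. 1) = a *\<^sub>R (t *\<^sub>R mdiag X) + b *\<^sub>R mdiag X"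
      by (simp add: mv_comb row Diag_mv vec_eq_iff)
    also have "\<dots> = (a * t + b) *\<^sub>R mdiag X" by (simp add: algebra_simps)
    also have "a * t + b = t' * (a + b)" using nz unfolding a_def b_def
      by (simp add: field_simps)
    finally show ?thesis using diagY by simp
  qed
  show ?thesis unfolding a_def[symmetric] b_def[symmetric] feasible_Q_def psd_def
    using symY psY nnY trY rowY by blast
qed

end
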